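(* Let $f\colon\mathbb{R}^n\to\mathbb{R}$ be differentiable, $\mu$-strongly convex, with $\|\nabla f(x)-\nabla f(y)\|\le L\|x-y\|$ for all $x,y$ (Euclidean norm), where $0<\mu<L$, and let $x_\star$ be its minimizer, $f_\star=f(x_\star)$. Let $\kappa=L/\mu$ and $\gamma=\frac{\sqrt{8\kappa+1}+3}{2\kappa-2}$. Given $x_0$, let $y_0=x_0$ and for $k=0,1,\dots$ \[ y_{k+1}=x_k-\tfrac1L\nabla f(x_k),\qquad x_{k+1}=y_{k+1}+\frac{1}{2\gamma+1}(y_{k+1}-y_k)+\frac{1}{2\gamma+1}(y_{k+1}-x_k). \] Then for $k=1,2,\dots$, \[ f(y_k)-f_\star\le(1+\gamma)^{-k+1}\,\frac{\mu+2L}{2}\,\|x_0-x_\star\|^2, \] and this bound is $\mathcal{O}\big(\exp(-\sqrt2\,k/\sqrt\kappa)\big)$.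
   Context: A function $f$ is $\mu$-strongly convex if $f(x)-\frac{\mu}{2}\|x\|^2$ is convex. The iteration is called SC-OGM. *)

theory Defs
  imports "HOL-Analysis.Analysis" "HOL-Library.Landau_Symbols"
begin

definition strongly_convex :: "real \<Rightarrow> ('a::real_inner \<Rightarrow> real) \<Rightarrow> bool" where
  "strongly_convex \<mu> f \<longleftrightarrow> convex_on UNIV (\<lambda>x. f x - \<mu> / 2 * (norm x)\<^sup>2)"

end

theory Submission
  imports Defs
begin


lemma line_deriv:
  fixes h :: "'a::real_inner \<Rightarrow> real"
  assumes "(h has_derivative (\<lambda>w. D \<bullet> w)) (at (v + t *\<^sub>R d))"
  shows "((\<lambda>t. h (v + t *\<^sub>R d)) has_real_derivative (D \<bullet> d)) (at t)"
proof -
  have l: "((\<lambda>t. v + t *\<^sub>R d) has_derivative (\<lambda>s. s *\<^sub>R d)) (at t)"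
    by (auto intro!: derivative_eq_intros)
  have "((\<lambda>t. h (v + t *\<^sub>R d)) has_derivative (\<lambda>s. D \<bullet> (s *\<^sub>R d))) (at t)"
    using has_derivative_compose[OF l assms] by (simp add: o_def)
  moreover have "(\<lambda>s. D \<bullet> (s *\<^sub>R d)) = (*) (D \<bullet> d)"
    by (auto simp: fun_eq_iff)
  ultimately show ?thesis by (simp add: has_field_derivative_def)
qed

lemma convex_first_order:
  fixes h :: "'a::real_inner \<Rightarrow> real"
  assumes cv: "convex_on UNIV h" and dh: "(h has_derivative (\<lambda>w. D \<bullet> w)) (at v)"
  shows "h u \<ge> h v + D \<bullet> (u - v)"
proof -
  define d where "d = u - v"
  define \<phi> where "\<phi> = (\<lambda>t::real. h (v + t *\<^sub>R d))"
  have "convex_on UNIV \<phi>"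
  proof (rule convex_onI)
    fix t x y :: real assume "0 < t" "t < 1"
    have "v + ((1 - t) * x + t * y) *\<^sub>R d = (1 - t) *\<^sub>R (v + x *\<^sub>R d) + t *\<^sub>R (v + y *\<^sub>R d)"
      by (simp add: algebra_simps)
    moreover have "h ((1 - t) *\<^sub>R (v + x *\<^sub>R d) + t *\<^sub>R (v + y *\<^sub>R d)) \<le> (1 - t) * h (v + x *\<^sub>R d) + t * h (v + y *\<^sub>R d)"
      using convex_onD[OF cv] \<open>0 < t\<close> \<open>t < 1\<close> by simp
    ultimately show "\<phi> ((1 - t) *\<^sub>R x + t *\<^sub>R y) \<le> (1 - t) * \<phi> x + t * \<phi> y"
      by (simp add: \<phi>_def)
  qed auto
  moreover have "(\<phi> has_real_derivative (D \<bullet> d)) (at 0)"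
    unfolding \<phi>_def by (rule line_deriv) (use dh in simp)
  ultimately have "\<phi> 1 - \<phi> 0 \<ge> (D \<bullet> d) * (1 - 0)"
    by (intro convex_on_imp_above_tangent[where A=UNIV]) auto
  then show ?thesis by (simp add: \<phi>_def d_def)
qed

lemma descent:
  fixes f :: "'a::real_inner \<Rightarrow> real"
  assumes grad: "\<And>z. (f has_derivative (\<lambda>h. grad z \<bullet> h)) (at z)"
    and lip: "\<And>u v. norm (grad u - grad v) \<le> L * norm (u - v)"
  shows "f u \<le> f v + grad v \<bullet> (u - v) + L / 2 * (norm (u - v))\<^sup>2"
proof -
  define d where "d = u - v"
  define \<psi> where "\<psi> = (\<lambda>t. f (v + t *\<^sub>R d) - t * (grad v \<bullet> d) - L / 2 * t\<^sup>2 * (norm d)\<^sup>2)"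
  have "\<psi> 1 \<le> \<psi> 0"
  proof (rule DERIV_nonpos_imp_nonincreasing[of 0 1])
    fix t :: real assume t: "0 \<le> t" "t \<le> 1"
    have d1: "((\<lambda>t. f (v + t *\<^sub>R d)) has_real_derivative (grad (v + t *\<^sub>R d) \<bullet> d)) (at t)"
      by (rule line_deriv) (rule grad)
    have "DERIV \<psi> t :> grad (v + t *\<^sub>R d) \<bullet> d - grad v \<bullet> d - L / 2 * (2 * t) * (norm d)\<^sup>2"
      unfolding \<psi>_def
      by (auto intro!: derivative_eq_intros d1 simp: power2_eq_square)
    moreover have "grad (v + t *\<^sub>R d) \<bullet> d - grad v \<bullet> d - L / 2 * (2 * t) * (norm d)\<^sup>2 \<le> 0"
    proof -
      have "grad (v + t *\<^sub>R d) \<bullet> d - grad v \<bullet> d = (grad (v + t *\<^sub>R d) - grad v) \<bullet> d"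
        by (simp add: inner_diff_left)
      also have "\<dots> \<le> norm (grad (v + t *\<^sub>R d) - grad v) * norm d"
        by (rule norm_cauchy_schwarz)
      also have "\<dots> \<le> L * norm (t *\<^sub>R d) * norm d"
        using lip[of "v + t *\<^sub>R d" v] by (simp add: mult_right_mono)
      also have "\<dots> = L * t * (norm d)\<^sup>2"
        using t by (simp add: power2_eq_square)
      finally show ?thesis by simp
    qed
    ultimately show "\<exists>y. DERIV \<psi> t :> y \<and> y \<le> 0" by blast
  qed simp
  then show ?thesis by (simp add: \<psi>_def d_def)
qed

lemma interp:
  fixes f :: "'a::real_inner \<Rightarrow> real"
  assumes grad: "\<And>z. (f has_derivative (\<lambda>h. grad z \<bullet> h)) (at z)"
    and sc: "strongly_convex \<mu> f"
    and lip: "\<And>u v. norm (grad u - grad v) \<le> L * norm (u - v)"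
    and mu_pos: "0 < \<mu>" and mu_L: "\<mu> < L"
  shows "f u \<ge> f v + grad v \<bullet> (u - v)
     + (norm (grad u - grad v - \<mu> *\<^sub>R (u - v)))\<^sup>2 / (2 * (L - \<mu>)) + \<mu> / 2 * (norm (u - v))\<^sup>2"
proof -
  define M where "M = L - \<mu>"
  have M: "M > 0" using mu_L by (simp add: M_def)
  define h where "h = (\<lambda>x. f x - \<mu> / 2 * (norm x)\<^sup>2)"
  define dh where "dh = (\<lambda>x. grad x - \<mu> *\<^sub>R x)"
  have cvx: "convex_on UNIV h" using sc by (simp add: strongly_convex_def h_def)
  have hd: "(h has_derivative (\<lambda>w. dh x \<bullet> w)) (at x)" for x
  proof -
    have "((\<lambda>x. f x - \<mu> / 2 * (x \<bullet> x)) has_derivative (\<lambda>w. grad x \<bullet> w - \<mu> / 2 * (w \<bullet> x + x \<bullet> w))) (at x)"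
      by (auto intro!: derivative_eq_intros grad)
    moreover have "(\<lambda>w. grad x \<bullet> w - \<mu> / 2 * (w \<bullet> x + x \<bullet> w)) = (\<lambda>w. dh x \<bullet> w)"
      by (auto simp: fun_eq_iff dh_def inner_diff_left inner_diff_right inner_commute)
    ultimately show ?thesis by (simp add: h_def power2_norm_eq_inner)
  qed
  have lower: "h w \<ge> h x + dh x \<bullet> (w - x)" for x w
    by (rule convex_first_order[OF cvx hd])
  have upper: "h w \<le> h x + dh x \<bullet> (w - x) + M / 2 * (norm (w - x))\<^sup>2" for x w
  proof -
    have "f w \<le> f x + grad x \<bullet> (w - x) + L / 2 * (norm (w - x))\<^sup>2"
      by (rule descent[OF grad lip])
    then show ?thesis
      by (simp add: h_def dh_def M_def power2_norm_eq_inner inner_diff_left inner_diff_right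
          inner_commute algebra_simps; simp add: field_simps; linarith)
  qed
  define p where "p = dh u - dh v"
  define w where "w = u - (1 / M) *\<^sub>R p"
  have "h v + dh v \<bullet> (w - v) \<le> h u + dh u \<bullet> (w - u) + M / 2 * (norm (w - u))\<^sup>2"
    using lower[where x=v and w=w] upper[where x=u and w=w] by linarith
  moreover have "dh u \<bullet> (w - u) - dh v \<bullet> (w - v) = - (p \<bullet> p) / M - dh v \<bullet> (u - v)"
    using M by (simp add: w_def p_def inner_diff_left inner_diff_right algebra_simps; simp add: field_simps)
  moreover have "M / 2 * (norm (w - u))\<^sup>2 = (p \<bullet> p) / (2 * M)"
    using M by (simp add: w_def power2_eq_square flip: power2_norm_eq_inner)
  ultimately have key: "h u \<ge> h v + dh v \<bullet> (u - v) + (p \<bullet> p) / (2 * M)"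
    by (simp add: field_simps)
  have pe: "p = grad u - grad v - \<mu> *\<^sub>R (u - v)"
    by (simp add: p_def dh_def algebra_simps)
  have n: "(norm (grad u - grad v - \<mu> *\<^sub>R (u - v)))\<^sup>2 = p \<bullet> p"
    by (simp add: pe power2_norm_eq_inner)
  show ?thesis unfolding n using key
    by (simp add: h_def dh_def M_def pe[symmetric] power2_norm_eq_inner inner_diff_left inner_diff_right
          inner_commute algebra_simps)
qed



lemma T_identity:
  fixes D X G H :: "'a::real_inner"
  assumes P_DD: "- a*a*m2 + c*c*hM*m*m*rho + c*c*m2*rho - k1 + m2*rho = 0"
    and P_DG: "2*c*hM*iL*m*m*rho - 2*c*hM*m*rho + 2*c*iL*m2*rho = 0"
    and P_DH: "-2*a*b*m2 + 2*c*hM*m*rho + c*rho - 2*k1*k2 = 0"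
    and P_DX: "2*a*m2 - 2*m2*rho = 0"
    and P_GG: "- hL*rho + hM*iL*iL*m*m*rho - 2*hM*iL*m*rho + hM*rho + iL*iL*m2*rho = 0"
    and P_GH: "2*hM*iL*m*rho - 2*hM*rho + iL*rho = 0"
    and P_HH: "- b*b*m2 + c*hM + hL + hM*rho - k1*k2*k2 - k3*k4*k4 - k5 = 0"
    and P_XH: "2*b*m2 - c - 2*c*hM*m + 2*k3*k4 = 0"
    and P_XX: "c*hM*m*m + c*m2 - k3 - m2 + m2*rho = 0"
    and P_f1: "-1 + c + rho = 0"
  shows "rho*(fk - hL*(norm G)\<^sup>2 + m2*(norm (X - D))\<^sup>2)
      - (f1 - hL*(norm H)\<^sup>2 + m2*(norm (X - a *\<^sub>R D - b *\<^sub>R H))\<^sup>2)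
    = rho*(fk - f1 - H \<bullet> (c *\<^sub>R D + iL *\<^sub>R G)
         - hM*(norm (G - H - m *\<^sub>R (c *\<^sub>R D + iL *\<^sub>R G)))\<^sup>2 - m2*(norm (c *\<^sub>R D + iL *\<^sub>R G))\<^sup>2)
    + c*(- f1 + H \<bullet> X - hM*(norm (H - m *\<^sub>R X))\<^sup>2 - m2*(norm X)\<^sup>2)
    + (k1*(norm (D + k2 *\<^sub>R H))\<^sup>2 + k3*(norm (X - k4 *\<^sub>R H))\<^sup>2 + k5*(norm H)\<^sup>2)"
proof -
  have "rho*(fk - hL*(norm G)\<^sup>2 + m2*(norm (X - D))\<^sup>2)
      - (f1 - hL*(norm H)\<^sup>2 + m2*(norm (X - a *\<^sub>R D - b *\<^sub>R H))\<^sup>2)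
    - (rho*(fk - f1 - H \<bullet> (c *\<^sub>R D + iL *\<^sub>R G)
         - hM*(norm (G - H - m *\<^sub>R (c *\<^sub>R D + iL *\<^sub>R G)))\<^sup>2 - m2*(norm (c *\<^sub>R D + iL *\<^sub>R G))\<^sup>2)
    + c*(- f1 + H \<bullet> X - hM*(norm (H - m *\<^sub>R X))\<^sup>2 - m2*(norm X)\<^sup>2)
    + (k1*(norm (D + k2 *\<^sub>R H))\<^sup>2 + k3*(norm (X - k4 *\<^sub>R H))\<^sup>2 + k5*(norm H)\<^sup>2))
    = (D \<bullet> D) * (- a*a*m2 + c*c*hM*m*m*rho + c*c*m2*rho - k1 + m2*rho)
    + (D \<bullet> G) * (2*c*hM*iL*m*m*rho - 2*c*hM*m*rho + 2*c*iL*m2*rho)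
    + (D \<bullet> H) * (-2*a*b*m2 + 2*c*hM*m*rho + c*rho - 2*k1*k2)
    + (D \<bullet> X) * (2*a*m2 - 2*m2*rho)
    + (G \<bullet> G) * (- hL*rho + hM*iL*iL*m*m*rho - 2*hM*iL*m*rho + hM*rho + iL*iL*m2*rho)
    + (G \<bullet> H) * (2*hM*iL*m*rho - 2*hM*rho + iL*rho)
    + (H \<bullet> H) * (- b*b*m2 + c*hM + hL + hM*rho - k1*k2*k2 - k3*k4*k4 - k5)
    + (X \<bullet> H) * (2*b*m2 - c - 2*c*hM*m + 2*k3*k4)
    + (X \<bullet> X) * (c*hM*m*m + c*m2 - k3 - m2 + m2*rho)
    + f1 * (-1 + c + rho)"
    by (simp add: power2_norm_eq_inner inner_add_left inner_add_right inner_diff_left inner_diff_right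
        inner_commute algebra_simps)
  then show ?thesis
    using assms by simp
qed



lemma coeffs:
  fixes g L :: real
  assumes g: "0 < g" and L: "0 < L"
    and p_def: "p = 1 + g" and q_def: "q = 2 + g" and t_def: "t = 3*g + 2" and w_def: "w = g\<^sup>2 + 5*g + 2"
    and rho_def: "rho = 1 / p" and c_def: "c = g / p" and m_def: "m = L * g\<^sup>2 / (p*q)"
    and m2_def: "m2 = m / 2" and hL_def: "hL = 1 / (2*L)" and iL_def: "iL = 1 / L" and hM_def: "hM = 1 / (2*(L - m))"
    and a_def: "a = 1 / p" and b_def: "b = g / (p*m)"
    and k1_def: "k1 = L * g^3 * w / (2*q*p^3*t)" and k2_def: "k2 = q*p/(w*L)"
    and k3_def: "k3 = L * g^5 / (2*q*p\<^sup>2*t)" and k4_def: "k4 = 1 / m" and k5_def: "k5 = g\<^sup>2 / (2*p*w*L)"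
  shows "- a*a*m2 + c*c*hM*m*m*rho + c*c*m2*rho - k1 + m2*rho = 0"
    and "2*c*hM*iL*m*m*rho - 2*c*hM*m*rho + 2*c*iL*m2*rho = 0"
    and "-2*a*b*m2 + 2*c*hM*m*rho + c*rho - 2*k1*k2 = 0"
    and "2*a*m2 - 2*m2*rho = 0"
    and "- hL*rho + hM*iL*iL*m*m*rho - 2*hM*iL*m*rho + hM*rho + iL*iL*m2*rho = 0"
    and "2*hM*iL*m*rho - 2*hM*rho + iL*rho = 0"
    and "- b*b*m2 + c*hM + hL + hM*rho - k1*k2*k2 - k3*k4*k4 - k5 = 0"
    and "2*b*m2 - c - 2*c*hM*m + 2*k3*k4 = 0"
    and "c*hM*m*m + c*m2 - k3 - m2 + m2*rho = 0"
    and "-1 + c + rho = 0"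
proof -
  have p: "p > 0" "q > 0" "t > 0" "w > 0" using g
    by (auto simp: p_def q_def t_def w_def) (smt (verit) zero_le_power2)
  have pqt: "p*q - g\<^sup>2 = t" by (simp add: p_def q_def t_def algebra_simps power2_eq_square)
  have Lm0: "L - m = L * (p*q - g\<^sup>2) / (p*q)"
    using p L by (simp add: m_def field_simps)
  have Lm: "L - m = L * t / (p*q)" using Lm0 pqt by simp
  have m: "m > 0" using p g L by (simp add: m_def)
  have hM': "hM = p*q/(2*L*t)" using Lm p L by (simp add: hM_def)
  note defs = rho_def c_def m2_def hL_def iL_def hM' a_def b_def k1_def k2_def k3_def k4_def k5_def
  note nz = p L g m
  show "- a*a*m2 + c*c*hM*m*m*rho + c*c*m2*rho - k1 + m2*rho = 0"
    using nz unfolding defs by (simp add: m_def field_simps) (simp add: p_def q_def t_def w_def algebra_simps power2_eq_square power3_eq_cube eval_nat_numeral)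
  show "2*c*hM*iL*m*m*rho - 2*c*hM*m*rho + 2*c*iL*m2*rho = 0"
    using nz unfolding defs by (simp add: m_def field_simps) (simp add: p_def q_def t_def w_def algebra_simps power2_eq_square power3_eq_cube eval_nat_numeral)
  show "-2*a*b*m2 + 2*c*hM*m*rho + c*rho - 2*k1*k2 = 0"
    using nz unfolding defs by (simp add: m_def field_simps) (simp add: p_def q_def t_def w_def algebra_simps power2_eq_square power3_eq_cube eval_nat_numeral)
  show "2*a*m2 - 2*m2*rho = 0"
    using nz unfolding defs by (simp add: m_def field_simps)
  show "- hL*rho + hM*iL*iL*m*m*rho - 2*hM*iL*m*rho + hM*rho + iL*iL*m2*rho = 0"
    using nz unfolding defs by (simp add: m_def field_simps) (simp add: p_def q_def t_def w_def algebra_simps power2_eq_square power3_eq_cube eval_nat_numeral)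
  show "2*hM*iL*m*rho - 2*hM*rho + iL*rho = 0"
    using nz unfolding defs by (simp add: m_def field_simps) (simp add: p_def q_def t_def w_def algebra_simps power2_eq_square power3_eq_cube eval_nat_numeral)
  show "- b*b*m2 + c*hM + hL + hM*rho - k1*k2*k2 - k3*k4*k4 - k5 = 0"
    using nz unfolding defs by (simp add: m_def field_simps) (simp add: p_def q_def t_def w_def algebra_simps power2_eq_square power3_eq_cube eval_nat_numeral)
  show "2*b*m2 - c - 2*c*hM*m + 2*k3*k4 = 0"
    using nz unfolding defs by (simp add: m_def field_simps) (simp add: p_def q_def t_def w_def algebra_simps power2_eq_square power3_eq_cube eval_nat_numeral)
  show "c*hM*m*m + c*m2 - k3 - m2 + m2*rho = 0"
    using nz unfolding defs by (simp add: m_def field_simps) (simp add: p_def q_def t_def w_def algebra_simps power2_eq_square power3_eq_cube eval_nat_numeral)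
  show "-1 + c + rho = 0"
    using nz unfolding defs by (simp add: field_simps p_def)
qed


lemma one_step:
  fixes xk x1 z1 z2 xs G H :: "'a::real_inner"
  assumes g: "0 < g" and L: "0 < L" and mu: "\<mu> = L * g\<^sup>2 / ((1+g)*(2+g))"
    and hX: "xk - x1 = (g/(1+g)) *\<^sub>R (x1 - z1) + (1/L) *\<^sub>R G"
    and hZ: "z2 = x1 - (1/(1+g)) *\<^sub>R (x1 - z1) - (g/((1+g)*\<mu>)) *\<^sub>R H"
    and H1: "fxk \<ge> fx1 + H \<bullet> (xk - x1) + (norm (G - H - \<mu> *\<^sub>R (xk - x1)))\<^sup>2 / (2*(L-\<mu>))
        + \<mu>/2 * (norm (xk - x1))\<^sup>2"
    and H2: "fxs \<ge> fx1 + H \<bullet> (xs - x1) + (norm (0 - H - \<mu> *\<^sub>R (xs - x1)))\<^sup>2 / (2*(L-\<mu>))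
        + \<mu>/2 * (norm (xs - x1))\<^sup>2"
  shows "fx1 - fxs - (norm H)\<^sup>2/(2*L) + \<mu>/2*(norm (z2 - xs))\<^sup>2
     \<le> (1/(1+g)) * (fxk - fxs - (norm G)\<^sup>2/(2*L) + \<mu>/2*(norm (z1 - xs))\<^sup>2)"
proof -
  define p where "p = 1 + g"
  define q where "q = 2 + g"
  define t where "t = 3*g + 2"
  define w where "w = g\<^sup>2 + 5*g + 2"
  define rho where "rho = 1 / p"
  define c where "c = g / p"
  define m where "m = L * g\<^sup>2 / (p*q)"
  define m2 where "m2 = m / 2"
  define hL where "hL = 1 / (2*L)"
  define iL where "iL = 1 / L"
  define hM where "hM = 1 / (2*(L - m))"
  define a where "a = 1 / p"
  define b where "b = g / (p*m)"
  define k1 where "k1 = L * g^3 * w / (2*q*p^3*t)"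
  define k2 where "k2 = q*p/(w*L)"
  define k3 where "k3 = L * g^5 / (2*q*p\<^sup>2*t)"
  define k4 where "k4 = 1 / m"
  define k5 where "k5 = g\<^sup>2 / (2*p*w*L)"
  note cf = coeffs[OF g L p_def q_def t_def w_def rho_def c_def m_def m2_def hL_def iL_def hM_def
      a_def b_def k1_def k2_def k3_def k4_def k5_def]
  have mm: "m = \<mu>" using mu by (simp add: m_def p_def q_def)
  define D where "D = x1 - z1"
  define X where "X = x1 - xs"
  define fk where "fk = fxk - fxs"
  define f1 where "f1 = fx1 - fxs"
  have T: "rho*(fk - hL*(norm G)\<^sup>2 + m2*(norm (X - D))\<^sup>2)
      - (f1 - hL*(norm H)\<^sup>2 + m2*(norm (X - a *\<^sub>R D - b *\<^sub>R H))\<^sup>2)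
    = rho*(fk - f1 - H \<bullet> (c *\<^sub>R D + iL *\<^sub>R G)
         - hM*(norm (G - H - m *\<^sub>R (c *\<^sub>R D + iL *\<^sub>R G)))\<^sup>2 - m2*(norm (c *\<^sub>R D + iL *\<^sub>R G))\<^sup>2)
    + c*(- f1 + H \<bullet> X - hM*(norm (H - m *\<^sub>R X))\<^sup>2 - m2*(norm X)\<^sup>2)
    + (k1*(norm (D + k2 *\<^sub>R H))\<^sup>2 + k3*(norm (X - k4 *\<^sub>R H))\<^sup>2 + k5*(norm H)\<^sup>2)"
    by (rule T_identity) (use cf in auto)
  have pos: "p > 0" "q > 0" "t > 0" "w > 0" using g
    by (auto simp: p_def q_def t_def w_def) (smt (verit) zero_le_power2)
  have mpos: "m > 0" using pos g L by (simp add: m_def)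
  have dX: "c *\<^sub>R D + iL *\<^sub>R G = xk - x1" using hX by (simp add: c_def iL_def D_def p_def)
  have e1: "X - D = z1 - xs" by (simp add: X_def D_def)
  have e2: "X - a *\<^sub>R D - b *\<^sub>R H = z2 - xs"
    using hZ by (simp add: X_def D_def a_def b_def p_def mm algebra_simps)
  have Lm: "L - m > 0"
  proof -
    have "m = L * (g\<^sup>2 / (p*q))" by (simp add: m_def)
    moreover have "g\<^sup>2 < p*q"
      using g by (simp add: p_def q_def power2_eq_square algebra_simps)
    then have "g\<^sup>2 / (p*q) < 1"
      using pos by (simp add: divide_less_eq_1_pos)
    ultimately have "m < L * 1" using L by (metis mult_strict_left_mono)
    then show ?thesis by simp
  qed
  define S1 where "S1 = fk - f1 - H \<bullet> (c *\<^sub>R D + iL *\<^sub>R G)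
         - hM*(norm (G - H - m *\<^sub>R (c *\<^sub>R D + iL *\<^sub>R G)))\<^sup>2 - m2*(norm (c *\<^sub>R D + iL *\<^sub>R G))\<^sup>2"
  define S2 where "S2 = - f1 + H \<bullet> X - hM*(norm (H - m *\<^sub>R X))\<^sup>2 - m2*(norm X)\<^sup>2"
  have hMu: "hM * u = u / (2*(L-\<mu>))" for u by (simp add: hM_def mm)
  have m2u: "m2 * u = \<mu> / 2 * u" for u by (simp add: m2_def mm)
  have S1: "S1 \<ge> 0"
    using H1 unfolding S1_def dX fk_def f1_def hMu m2u mm by linarith
  have n0: "norm (0 - H - \<mu> *\<^sub>R (xs - x1)) = norm (H - \<mu> *\<^sub>R X)"
  proof -
    have "0 - H - \<mu> *\<^sub>R (xs - x1) = - (H - \<mu> *\<^sub>R X)" by (simp add: X_def algebra_simps)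
    then show ?thesis by (metis norm_minus_cancel)
  qed
  have n1: "norm (xs - x1) = norm X" by (simp add: X_def norm_minus_commute)
  have i1: "H \<bullet> (xs - x1) = - (H \<bullet> X)" by (simp add: X_def inner_diff_right)
  have S2: "S2 \<ge> 0"
    using H2 unfolding S2_def hMu m2u mm n0 n1 i1 f1_def by linarith
  have sos: "k1*(norm (D + k2 *\<^sub>R H))\<^sup>2 + k3*(norm (X - k4 *\<^sub>R H))\<^sup>2 + k5*(norm H)\<^sup>2 \<ge> 0"
    using pos g L by (simp add: k1_def k3_def k5_def)
  have rc: "rho \<ge> 0" "c \<ge> 0" using pos g by (auto simp: rho_def c_def)
  have "rho * S1 \<ge> 0" "c * S2 \<ge> 0" using rc S1 S2 by auto
  then have main: "rho*(fk - hL*(norm G)\<^sup>2 + m2*(norm (X - D))\<^sup>2)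
      - (f1 - hL*(norm H)\<^sup>2 + m2*(norm (X - a *\<^sub>R D - b *\<^sub>R H))\<^sup>2) \<ge> 0"
    using T sos unfolding S1_def S2_def by linarith
  show ?thesis
    using main unfolding e1 e2 fk_def f1_def hL_def m2_def rho_def p_def mm by (simp add: field_simps)
qed

lemma ln_lower:
  fixes x :: real
  assumes "0 \<le> x"
  shows "2 * x / (2 + x) \<le> ln (1 + x)"
proof -
  define \<phi> where "\<phi> = (\<lambda>t::real. ln (1 + t) - 2 * t / (2 + t))"
  have "\<phi> 0 \<le> \<phi> x"
  proof (rule DERIV_nonneg_imp_nondecreasing[OF assms])
    fix t :: real assume t: "0 \<le> t" "t \<le> x"
    have "DERIV \<phi> t :> 1 / (1 + t) - (2 * (2 + t) - 2 * t) / (2 + t)\<^sup>2"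
      unfolding \<phi>_def using t
      by (auto intro!: derivative_eq_intros simp: power2_eq_square field_simps)
    moreover have "1 / (1 + t) - (2 * (2 + t) - 2 * t) / (2 + t)\<^sup>2 \<ge> 0"
    proof -
      have "4 * (1 + t) \<le> (2 + t)\<^sup>2" by (simp add: power2_eq_square algebra_simps)
      then have "4 / (2 + t)\<^sup>2 \<le> 1 / (1 + t)"
        using t by (simp add: field_simps)
      then show ?thesis by simp
    qed
    ultimately show "\<exists>y. DERIV \<phi> t :> y \<and> 0 \<le> y" by blast
  qed
  then show ?thesis by (simp add: \<phi>_def)
qed

lemma lin_comb_eq:
  fixes u v w :: "real ^ 'n"
  assumes "\<And>i. u $ i = v $ i"
  shows "u = v"
  using assms by (simp add: vec_eq_iff)

theorem theorem3:
  fixes f :: "real ^ 'n \<Rightarrow> real"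
    and grad :: "real ^ 'n \<Rightarrow> real ^ 'n"
    and \<mu> L :: real
    and xs x0 :: "real ^ 'n"
    and x y :: "nat \<Rightarrow> real ^ 'n"
  assumes grad: "\<And>z. (f has_derivative (\<lambda>h. grad z \<bullet> h)) (at z)"
    and sc: "strongly_convex \<mu> f"
    and lip: "\<And>u v. norm (grad u - grad v) \<le> L * norm (u - v)"
    and mu_pos: "0 < \<mu>" and mu_L: "\<mu> < L"
    and xs_min: "\<And>z. f xs \<le> f z"
    and x_0: "x 0 = x0" and y_0: "y 0 = x0"
    and y_step: "\<And>k. y (Suc k) = x k - (1 / L) *\<^sub>R grad (x k)"
    and x_step: "\<And>k. x (Suc k) = y (Suc k)
        + (1 / (2 * ((sqrt (8 * (L / \<mu>) + 1) + 3) / (2 * (L / \<mu>) - 2)) + 1)) *\<^sub>R (y (Suc k) - y k)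
        + (1 / (2 * ((sqrt (8 * (L / \<mu>) + 1) + 3) / (2 * (L / \<mu>) - 2)) + 1)) *\<^sub>R (y (Suc k) - x k)"
  shows "(\<forall>k\<ge>1. f (y k) - f xs \<le>
           (1 + (sqrt (8 * (L / \<mu>) + 1) + 3) / (2 * (L / \<mu>) - 2)) powr (- real k + 1)
             * ((\<mu> + 2 * L) / 2) * (norm (x0 - xs))\<^sup>2)
       \<and> (\<lambda>k::nat. (1 + (sqrt (8 * (L / \<mu>) + 1) + 3) / (2 * (L / \<mu>) - 2)) powr (- real k + 1)
             * ((\<mu> + 2 * L) / 2) * (norm (x0 - xs))\<^sup>2)
           \<in> O(\<lambda>k. exp (- sqrt 2 * real k / sqrt (L / \<mu>)))"
proof -
  define \<gamma> where "\<gamma> = (sqrt (8 * (L / \<mu>) + 1) + 3) / (2 * (L / \<mu>) - 2)"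
  define \<kappa> where "\<kappa> = L / \<mu>"
  have Lpos: "0 < L" using mu_pos mu_L by linarith
  have kap: "\<kappa> > 1" using mu_pos mu_L by (simp add: \<kappa>_def)
  define s where "s = sqrt (8 * \<kappa> + 1)"
  have s2: "s\<^sup>2 = 8 * \<kappa> + 1" unfolding s_def using kap by (intro real_sqrt_pow2) linarith
  have s0: "s \<ge> 0" unfolding s_def using kap by (intro real_sqrt_ge_zero) linarith
  have gdef: "\<gamma> = (s + 3) / (2 * \<kappa> - 2)" by (simp add: \<gamma>_def s_def \<kappa>_def)
  have gpos: "\<gamma> > 0" using kap s0 by (simp add: gdef)
  have e: "(2 * \<kappa> - 2) * \<gamma> = s + 3" using kap by (simp add: gdef)
  have h1: "(2 * \<kappa> - 2) * ((2 * \<kappa> - 2) * \<gamma>\<^sup>2) = (2 * \<kappa> - 2) * (4 + 6 * \<gamma>)"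
  proof -
    have "(2 * \<kappa> - 2) * ((2 * \<kappa> - 2) * \<gamma>\<^sup>2) = ((2 * \<kappa> - 2) * \<gamma>)\<^sup>2"
      by (simp add: power2_eq_square)
    also have "\<dots> = (s + 3)\<^sup>2" using e by simp
    also have "\<dots> = s\<^sup>2 + 6 * s + 9" by (simp add: power2_eq_square algebra_simps)
    also have "\<dots> = (8 * \<kappa> + 1) + 6 * ((2 * \<kappa> - 2) * \<gamma> - 3) + 9" using s2 e by simp
    also have "\<dots> = (2 * \<kappa> - 2) * (4 + 6 * \<gamma>)" by (simp add: algebra_simps)
    finally show ?thesis .
  qed
  have h2: "(2 * \<kappa> - 2) * \<gamma>\<^sup>2 = 4 + 6 * \<gamma>"
    using h1 kap by simp
  have kg: "\<kappa> * \<gamma>\<^sup>2 = (1 + \<gamma>) * (2 + \<gamma>)"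
    using h2 by (simp add: algebra_simps power2_eq_square)
  have mu_eq: "\<mu> = L * \<gamma>\<^sup>2 / ((1 + \<gamma>) * (2 + \<gamma>))"
  proof -
    have "L * \<gamma>\<^sup>2 = \<mu> * (\<kappa> * \<gamma>\<^sup>2)" using mu_pos by (simp add: \<kappa>_def)
    then have "L * \<gamma>\<^sup>2 = \<mu> * ((1 + \<gamma>) * (2 + \<gamma>))" using kg by simp
    moreover have "(1 + \<gamma>) * (2 + \<gamma>) \<noteq> 0" using gpos by simp
    ultimately show ?thesis by (simp add: eq_divide_eq)
  qed
  have xs': "x (Suc k) = y (Suc k) + (1 / (2 * \<gamma> + 1)) *\<^sub>R (y (Suc k) - y k)
        + (1 / (2 * \<gamma> + 1)) *\<^sub>R (y (Suc k) - x k)" for k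
    unfolding \<gamma>_def by (rule x_step)
  have gxs: "grad xs = 0"
  proof -
    have "(\<lambda>h. grad xs \<bullet> h) = (\<lambda>v. 0)"
      by (rule differential_zero_maxmin[of xs UNIV f]) (auto simp: grad xs_min)
    then have "grad xs \<bullet> grad xs = 0" by metis
    then show ?thesis by simp
  qed
  define z where "z = rec_nat x0 (\<lambda>k zk. (1 / (1 + \<gamma>)) *\<^sub>R zk + (\<gamma> / (1 + \<gamma>)) *\<^sub>R (x k - (1 / \<mu>) *\<^sub>R grad (x k)))"
  have z0: "z 0 = x0" by (simp add: z_def)
  have zS: "z (Suc k) = (1 / (1 + \<gamma>)) *\<^sub>R z k + (\<gamma> / (1 + \<gamma>)) *\<^sub>R (x k - (1 / \<mu>) *\<^sub>R grad (x k))" for k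
    by (simp add: z_def)
  have gnz: "1 + \<gamma> \<noteq> 0" "2 * \<gamma> + 1 \<noteq> 0" "2 + \<gamma> \<noteq> 0" "\<gamma> \<noteq> 0" using gpos by auto
  note vcomp = vector_add_component vector_minus_component vector_scaleR_component real_scaleR_def
    divide_inverse inverse_mult_distrib mult_1 mult_1_right
  have R: "inverse (2 * \<gamma> + 1) * (2 * \<gamma> + 1) = 1" "inverse (1 + \<gamma>) * (1 + \<gamma>) = 1"
    "inverse L * L = 1" "inverse \<mu> * (L * \<gamma>\<^sup>2) = (1 + \<gamma>) * (2 + \<gamma>)"
    using gnz Lpos mu_pos by (auto simp: mu_eq field_simps)
  have cpl: "x k = ((1 + \<gamma>) / (2 * \<gamma> + 1)) *\<^sub>R y k + (\<gamma> / (2 * \<gamma> + 1)) *\<^sub>R z k" for k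
  proof (induction k)
    case 0
    have "((1 + \<gamma>) / (2 * \<gamma> + 1)) + (\<gamma> / (2 * \<gamma> + 1)) = ((1 + \<gamma>) + \<gamma>) / (2 * \<gamma> + 1)"
      by (rule add_divide_distrib[symmetric])
    also have "\<dots> = 1"
    proof -
      have eq: "(1 + \<gamma>) + \<gamma> = 2 * \<gamma> + 1" by simp
      show ?thesis unfolding eq using gnz(2) by simp
    qed
    finally have "((1 + \<gamma>) / (2 * \<gamma> + 1)) + (\<gamma> / (2 * \<gamma> + 1)) = 1" .
    then have "x0 = ((1 + \<gamma>) / (2 * \<gamma> + 1) + \<gamma> / (2 * \<gamma> + 1)) *\<^sub>R x0" by simp
    then show ?case by (simp add: x_0 y_0 z0 scaleR_left_distrib)
  next
    case (Suc k)
    show ?case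
    proof (rule lin_comb_eq)
      fix i
      have IH: "x k $ i = ((1 + \<gamma>) * inverse (2 * \<gamma> + 1)) * y k $ i + (\<gamma> * inverse (2 * \<gamma> + 1)) * z k $ i"
        using arg_cong[OF Suc.IH, of "\<lambda>v. v $ i"] by (simp only: vcomp)
      show "x (Suc k) $ i = (((1 + \<gamma>) / (2 * \<gamma> + 1)) *\<^sub>R y (Suc k) + (\<gamma> / (2 * \<gamma> + 1)) *\<^sub>R z (Suc k)) $ i"
        using IH R
        unfolding xs' y_step zS
        by (simp only: vcomp) algebra
    qed
  qed
  define \<rho> where "\<rho> = 1 / (1 + \<gamma>)"
  have rho_pos: "\<rho> > 0" "\<rho> \<le> 1" using gpos by (auto simp: \<rho>_def)
  define \<Phi> where "\<Phi> = (\<lambda>k. f (x k) - f xs - (norm (grad (x k)))\<^sup>2 / (2 * L)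
      + \<mu> / 2 * (norm (z (Suc k) - xs))\<^sup>2)"
  have step: "\<Phi> (Suc k) \<le> \<rho> * \<Phi> k" for k
  proof -
    have hX: "x k - x (Suc k) = (\<gamma> / (1 + \<gamma>)) *\<^sub>R (x (Suc k) - z (Suc k)) + (1 / L) *\<^sub>R grad (x k)"
    proof (rule lin_comb_eq)
      fix i
      have C: "x (Suc k) $ i = ((1 + \<gamma>) * inverse (2 * \<gamma> + 1)) * y (Suc k) $ i
          + (\<gamma> * inverse (2 * \<gamma> + 1)) * z (Suc k) $ i"
        using arg_cong[OF cpl[of "Suc k"], of "\<lambda>v. v $ i"] by (simp only: vcomp)
      show "(x k - x (Suc k)) $ i = ((\<gamma> / (1 + \<gamma>)) *\<^sub>R (x (Suc k) - z (Suc k)) + (1 / L) *\<^sub>R grad (x k)) $ i"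
        using C R unfolding y_step by (simp only: vcomp) algebra
    qed
    have hZ: "z (Suc (Suc k)) = x (Suc k) - (1 / (1 + \<gamma>)) *\<^sub>R (x (Suc k) - z (Suc k))
        - (\<gamma> / ((1 + \<gamma>) * \<mu>)) *\<^sub>R grad (x (Suc k))"
    proof (rule lin_comb_eq)
      fix i
      show "z (Suc (Suc k)) $ i = (x (Suc k) - (1 / (1 + \<gamma>)) *\<^sub>R (x (Suc k) - z (Suc k))
        - (\<gamma> / ((1 + \<gamma>) * \<mu>)) *\<^sub>R grad (x (Suc k))) $ i"
        using R unfolding zS[of "Suc k"] by (simp only: vcomp) algebra
    qed
    have H2: "f xs \<ge> f (x (Suc k)) + grad (x (Suc k)) \<bullet> (xs - x (Suc k))
        + (norm (0 - grad (x (Suc k)) - \<mu> *\<^sub>R (xs - x (Suc k))))\<^sup>2 / (2 * (L - \<mu>))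
        + \<mu> / 2 * (norm (xs - x (Suc k)))\<^sup>2"
      using interp[OF grad sc lip mu_pos mu_L, where u=xs and v="x (Suc k)"] unfolding gxs .
    show ?thesis
      using one_step[OF gpos Lpos mu_eq hX hZ interp[OF grad sc lip mu_pos mu_L] H2]
      unfolding \<Phi>_def \<rho>_def .
  qed
  have iter: "\<Phi> k \<le> \<rho> ^ k * \<Phi> 0" for k
  proof (induction k)
    case 0 then show ?case by simp
  next
    case (Suc k)
    have "\<Phi> (Suc k) \<le> \<rho> * \<Phi> k" by (rule step)
    also have "\<dots> \<le> \<rho> * (\<rho> ^ k * \<Phi> 0)" using Suc.IH rho_pos by (simp add: mult_left_mono)
    finally show ?case by simp
  qed
  define E where "E = x0 - xs"
  define g0 where "g0 = grad x0"
  define A where "A = g0 \<bullet> E"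
  define B where "B = g0 \<bullet> g0"
  define C where "C = E \<bullet> E"
  define \<beta> where "\<beta> = \<gamma> / ((1 + \<gamma>) * \<mu>)"
  have z1e: "z (Suc 0) - xs = E - \<beta> *\<^sub>R g0"
  proof (rule lin_comb_eq)
    fix i
    show "(z (Suc 0) - xs) $ i = (E - \<beta> *\<^sub>R g0) $ i"
      using R unfolding zS[of 0] z0 x_0 E_def \<beta>_def g0_def by (simp only: vcomp) algebra
  qed
  have Bnn: "B \<ge> 0" by (simp add: B_def)
  have Cnn: "C \<ge> 0" by (simp add: C_def)
  have lipA: "A \<le> L * C"
  proof -
    have "A \<le> norm g0 * norm E" unfolding A_def by (rule norm_cauchy_schwarz)
    also have "\<dots> \<le> (L * norm E) * norm E"
      using lip[of x0 xs] gxs by (simp add: g0_def E_def mult_right_mono)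
    also have "\<dots> = L * C" by (simp add: C_def power2_eq_square[symmetric] power2_norm_eq_inner)
    finally show ?thesis .
  qed
  have sqnn: "B - 2 * L * A + L\<^sup>2 * C \<ge> 0"
  proof -
    have "(norm (g0 - L *\<^sub>R E))\<^sup>2 = B - 2 * L * A + L\<^sup>2 * C"
      unfolding power2_norm_eq_inner by (simp add: A_def B_def C_def power2_norm_eq_inner inner_diff_left inner_diff_right
          inner_commute algebra_simps power2_eq_square)
    then show ?thesis by (metis zero_le_power2)
  qed
  have I0: "f x0 - f xs \<le> A - (B - 2 * \<mu> * A + \<mu>\<^sup>2 * C) / (2 * (L - \<mu>)) - \<mu> / 2 * C"
  proof -
    have h: "f xs \<ge> f x0 + g0 \<bullet> (xs - x0) + (norm (0 - g0 - \<mu> *\<^sub>R (xs - x0)))\<^sup>2 / (2 * (L - \<mu>))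
        + \<mu> / 2 * (norm (xs - x0))\<^sup>2"
      using interp[OF grad sc lip mu_pos mu_L, where u=xs and v=x0] unfolding gxs g0_def .
    have a: "g0 \<bullet> (xs - x0) = - A" by (simp add: A_def E_def inner_diff_right)
    have b: "(norm (0 - g0 - \<mu> *\<^sub>R (xs - x0)))\<^sup>2 = B - 2 * \<mu> * A + \<mu>\<^sup>2 * C"
      unfolding power2_norm_eq_inner by (simp add: A_def B_def C_def E_def power2_norm_eq_inner inner_diff_left inner_diff_right
          inner_commute algebra_simps power2_eq_square)
    have c: "(norm (xs - x0))\<^sup>2 = C" by (simp add: C_def E_def power2_norm_eq_inner inner_commute
          inner_diff_left inner_diff_right algebra_simps)
    show ?thesis using h unfolding a b c by linarith
  qed
  have idm: "(B - 2 * \<mu> * A + \<mu>\<^sup>2 * C) / (2 * (L - \<mu>)) + \<mu> / 2 * C - B / (2 * L)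
      = \<mu> / (2 * (L - \<mu>) * L) * (B - 2 * L * A + L\<^sup>2 * C)"
    using Lpos mu_L by (simp add: field_simps) (simp add: algebra_simps power2_eq_square)
  have nn: "\<mu> / (2 * (L - \<mu>) * L) * (B - 2 * L * A + L\<^sup>2 * C) \<ge> 0"
    using mu_pos mu_L Lpos sqnn by simp
  have fdA: "f x0 - f xs \<le> A - B / (2 * L)" using I0 idm nn by linarith
  have z1n: "(norm (z (Suc 0) - xs))\<^sup>2 = C - 2 * \<beta> * A + \<beta>\<^sup>2 * B"
    unfolding z1e power2_norm_eq_inner by (simp add: A_def B_def C_def power2_norm_eq_inner inner_diff_left inner_diff_right
          inner_commute algebra_simps power2_eq_square)
  have mb: "\<mu> / 2 * (C - 2 * \<beta> * A + \<beta>\<^sup>2 * B)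
      = \<mu> / 2 * C - (\<gamma> / (1 + \<gamma>)) * A + ((2 + \<gamma>) / (2 * (1 + \<gamma>) * L)) * B"
  proof -
    have m1: "\<mu> * \<beta> = \<gamma> / (1 + \<gamma>)" using mu_pos gnz by (simp add: \<beta>_def)
    have m2: "\<mu> * \<beta>\<^sup>2 = (2 + \<gamma>) / ((1 + \<gamma>) * L)"
    proof -
      have R5: "inverse \<mu> * \<mu> = 1" using mu_pos by simp
      show ?thesis using R R5 unfolding \<beta>_def power2_eq_square
        by (simp only: divide_inverse inverse_mult_distrib mult_1 mult_1_right) algebra
    qed
    have "\<mu> / 2 * (C - 2 * \<beta> * A + \<beta>\<^sup>2 * B) = \<mu> / 2 * C - (\<mu> * \<beta>) * A + (\<mu> * \<beta>\<^sup>2) / 2 * B"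
      by (simp add: algebra_simps)
    also have "\<dots> = \<mu> / 2 * C - (\<gamma> / (1 + \<gamma>)) * A + ((2 + \<gamma>) / (2 * (1 + \<gamma>) * L)) * B"
      unfolding m1 m2 by simp
    finally show ?thesis .
  qed
  have kB: "((2 + \<gamma>) / (2 * (1 + \<gamma>) * L)) * B \<le> B / L"
  proof -
    have q1: "(2 + \<gamma>) / (2 * (1 + \<gamma>)) \<le> 1" using gpos by (simp add: divide_le_eq_1_pos)
    have q2: "(2 + \<gamma>) / (2 * (1 + \<gamma>) * L) = (2 + \<gamma>) / (2 * (1 + \<gamma>)) * (1 / L)" by simp
    have "(2 + \<gamma>) / (2 * (1 + \<gamma>) * L) \<le> 1 * (1 / L)"
      unfolding q2 using q1 Lpos by (intro mult_right_mono) auto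
    then show ?thesis using Bnn by (metis mult_right_mono times_divide_eq_left mult_1)
  qed
  have cA: "(1 - \<gamma> / (1 + \<gamma>)) * A \<le> (1 - \<gamma> / (1 + \<gamma>)) * (L * C)"
    using lipA gpos by (intro mult_left_mono) (auto simp: field_simps)
  have cC: "(1 - \<gamma> / (1 + \<gamma>)) * (L * C) \<le> L * C"
  proof -
    have "0 \<le> \<gamma> / (1 + \<gamma>) * (L * C)" using gpos Lpos Cnn by simp
    then show ?thesis by (simp add: algebra_simps)
  qed
  have init: "\<Phi> 0 \<le> (L + \<mu> / 2) * (norm (x0 - xs))\<^sup>2"
  proof -
    have P0: "\<Phi> 0 = (f x0 - f xs) - B / (2 * L) + \<mu> / 2 * (C - 2 * \<beta> * A + \<beta>\<^sup>2 * B)"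
      unfolding \<Phi>_def z1n by (simp add: x_0 B_def g0_def power2_norm_eq_inner)
    have "(L + \<mu> / 2) * (norm (x0 - xs))\<^sup>2 = L * C + \<mu> / 2 * C"
      by (simp add: C_def E_def power2_norm_eq_inner algebra_simps)
    moreover have "(1 - \<gamma> / (1 + \<gamma>)) * A = A - (\<gamma> / (1 + \<gamma>)) * A" by (simp add: algebra_simps)
    moreover have "B / (2 * L) + B / (2 * L) = B / L" by (simp add: field_simps)
    ultimately show ?thesis using P0 mb fdA kB cA cC by linarith
  qed
  have desc: "f (y (Suc j)) - f xs \<le> \<Phi> j" for j
  proof -
    have d: "f (y (Suc j)) \<le> f (x j) + grad (x j) \<bullet> (y (Suc j) - x j) + L / 2 * (norm (y (Suc j) - x j))\<^sup>2"
      by (rule descent[OF grad lip])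
    have yd: "y (Suc j) - x j = - ((1 / L) *\<^sub>R grad (x j))" by (simp add: y_step)
    have "grad (x j) \<bullet> (y (Suc j) - x j) + L / 2 * (norm (y (Suc j) - x j))\<^sup>2
        = - (norm (grad (x j)))\<^sup>2 / (2 * L)"
      unfolding yd power2_norm_eq_inner using Lpos
      by (simp add: field_simps power2_eq_square)
    moreover have "\<mu> / 2 * (norm (z (Suc j) - xs))\<^sup>2 \<ge> 0" using mu_pos by simp
    ultimately show ?thesis using d unfolding \<Phi>_def by linarith
  qed
  have part1: "\<forall>k\<ge>1. f (y k) - f xs \<le> (1 + \<gamma>) powr (- real k + 1) * ((\<mu> + 2 * L) / 2) * (norm (x0 - xs))\<^sup>2"
  proof (intro allI impI)
    fix k :: nat assume "k \<ge> 1"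
    then obtain j where kj: "k = Suc j" by (cases k) auto
    have pw: "(1 + \<gamma>) powr (- real k + 1) = \<rho> ^ j"
    proof -
      have "- real k + 1 = - real j" by (simp add: kj)
      then have "(1 + \<gamma>) powr (- real k + 1) = inverse ((1 + \<gamma>) powr real j)"
        by (simp add: powr_minus)
      also have "\<dots> = inverse ((1 + \<gamma>) ^ j)" using gpos by (simp add: powr_realpow)
      also have "\<dots> = \<rho> ^ j" by (simp add: \<rho>_def power_inverse inverse_eq_divide power_one_over)
      finally show ?thesis .
    qed
    have "f (y k) - f xs \<le> \<Phi> j" unfolding kj by (rule desc)
    also have "\<dots> \<le> \<rho> ^ j * \<Phi> 0" by (rule iter)
    also have "\<dots> \<le> \<rho> ^ j * ((L + \<mu> / 2) * (norm (x0 - xs))\<^sup>2)"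
      using init rho_pos by (simp add: mult_left_mono)
    also have "\<dots> = (1 + \<gamma>) powr (- real k + 1) * ((\<mu> + 2 * L) / 2) * (norm (x0 - xs))\<^sup>2"
      unfolding pw by (simp add: algebra_simps)
    finally show "f (y k) - f xs \<le> (1 + \<gamma>) powr (- real k + 1) * ((\<mu> + 2 * L) / 2) * (norm (x0 - xs))\<^sup>2" .
  qed
  have lnb: "sqrt 2 / sqrt (L / \<mu>) \<le> ln (1 + \<gamma>)"
  proof -
    have k2: "2 / \<kappa> = 2 * \<gamma>\<^sup>2 / ((1 + \<gamma>) * (2 + \<gamma>))"
    proof -
      have "\<kappa> = (1 + \<gamma>) * (2 + \<gamma>) / \<gamma>\<^sup>2" using kg gpos by (simp add: eq_divide_eq)
      then show ?thesis by simp
    qed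
    have diff: "(2 * \<gamma> / (2 + \<gamma>))\<^sup>2 - 2 * \<gamma>\<^sup>2 / ((1 + \<gamma>) * (2 + \<gamma>))
        = 2 * \<gamma> ^ 3 / ((1 + \<gamma>) * (2 + \<gamma>)\<^sup>2)"
    proof -
      have r: "inverse (2 + \<gamma>) * (2 + \<gamma>) = 1" "inverse (1 + \<gamma>) * (1 + \<gamma>) = 1" using gnz by auto
      show ?thesis using r unfolding power2_eq_square power3_eq_cube
        by (simp only: divide_inverse inverse_mult_distrib mult_1 mult_1_right) algebra
    qed
    have "2 * \<gamma> ^ 3 / ((1 + \<gamma>) * (2 + \<gamma>)\<^sup>2) \<ge> 0" using gpos by simp
    then have le: "2 / \<kappa> \<le> (2 * \<gamma> / (2 + \<gamma>))\<^sup>2" using diff k2 by linarith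
    have "sqrt 2 / sqrt (L / \<mu>) = sqrt (2 / \<kappa>)" by (simp only: \<kappa>_def real_sqrt_divide)
    also have "\<dots> \<le> sqrt ((2 * \<gamma> / (2 + \<gamma>))\<^sup>2)" using le by (rule real_sqrt_le_mono)
    also have "\<dots> = 2 * \<gamma> / (2 + \<gamma>)" using gpos by simp
    also have "\<dots> \<le> ln (1 + \<gamma>)" using gpos by (intro ln_lower) simp
    finally show ?thesis .
  qed
  have part2: "(\<lambda>k::nat. (1 + \<gamma>) powr (- real k + 1) * ((\<mu> + 2 * L) / 2) * (norm (x0 - xs))\<^sup>2)
      \<in> O(\<lambda>k. exp (- sqrt 2 * real k / sqrt (L / \<mu>)))"
  proof (rule bigoI)
    define W where "W = ((\<mu> + 2 * L) / 2) * (norm (x0 - xs))\<^sup>2"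
    have Wn: "W \<ge> 0" using mu_pos Lpos by (simp add: W_def)
    show "\<forall>\<^sub>F k in sequentially. norm ((1 + \<gamma>) powr (- real k + 1) * ((\<mu> + 2 * L) / 2) * (norm (x0 - xs))\<^sup>2)
        \<le> ((1 + \<gamma>) * W) * norm (exp (- sqrt 2 * real k / sqrt (L / \<mu>)))"
    proof (rule always_eventually, rule allI)
      fix k :: nat
      have p1: "(1 + \<gamma>) powr (- real k + 1) = (1 + \<gamma>) * exp (- real k * ln (1 + \<gamma>))"
      proof -
        have "(1 + \<gamma>) powr (- real k + 1) = exp ((- real k + 1) * ln (1 + \<gamma>))"
          using gpos by (simp add: powr_def)
        also have "\<dots> = exp (ln (1 + \<gamma>) + (- real k * ln (1 + \<gamma>)))"
          by (rule arg_cong[where f=exp]) (simp add: algebra_simps)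
        also have "\<dots> = (1 + \<gamma>) * exp (- real k * ln (1 + \<gamma>))"
          using gpos by (simp only: exp_add) simp
        finally show ?thesis .
      qed
      have "real k * (sqrt 2 / sqrt (L / \<mu>)) \<le> real k * ln (1 + \<gamma>)"
        using lnb by (intro mult_left_mono) auto
      moreover have "real k * (sqrt 2 / sqrt (L / \<mu>)) = sqrt 2 * real k / sqrt (L / \<mu>)" by simp
      ultimately have le1: "sqrt 2 * real k / sqrt (L / \<mu>) \<le> real k * ln (1 + \<gamma>)" by linarith
      have ng: "- sqrt 2 * real k / sqrt (L / \<mu>) = - (sqrt 2 * real k / sqrt (L / \<mu>))" by simp
      have "exp (- real k * ln (1 + \<gamma>)) \<le> exp (- sqrt 2 * real k / sqrt (L / \<mu>))"
        unfolding exp_le_cancel_iff ng using le1 by linarith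
      then have "(1 + \<gamma>) * exp (- real k * ln (1 + \<gamma>)) * W
          \<le> (1 + \<gamma>) * exp (- sqrt 2 * real k / sqrt (L / \<mu>)) * W"
        using gpos Wn by (intro mult_right_mono mult_left_mono) auto
      moreover have "(1 + \<gamma>) powr (- real k + 1) * ((\<mu> + 2 * L) / 2) * (norm (x0 - xs))\<^sup>2
          = (1 + \<gamma>) * exp (- real k * ln (1 + \<gamma>)) * W"
        unfolding p1 W_def by (simp only: mult.assoc)
      moreover have "(1 + \<gamma>) * exp (- real k * ln (1 + \<gamma>)) * W \<ge> 0" using gpos Wn by simp
      ultimately show "norm ((1 + \<gamma>) powr (- real k + 1) * ((\<mu> + 2 * L) / 2) * (norm (x0 - xs))\<^sup>2)
        \<le> ((1 + \<gamma>) * W) * norm (exp (- sqrt 2 * real k / sqrt (L / \<mu>)))"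
        by (simp add: algebra_simps)
    qed
  qed
  show ?thesis using part1 part2 unfolding \<gamma>_def by (rule conjI)
qed

end
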